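(* Let $\sigma\subseteq N_\mathbb{Q}$ be a strongly convex rational polyhedral cone, $\tau$ a $k$-dimensional regular face with primitive ray generators $p_1,\ldots,p_k$, $\{e_1^{(r)},e_2^{(r)}\}_{r=1}^k$ a set of Demazure roots of $\sigma$ compatible with $\tau$, and $\gamma$ a face of $\sigma$. Suppose that for each $r$ with $p_r\notin\gamma$ at least one of $e_1^{(r)},e_2^{(r)}$ lies in $\gamma^\perp$. Then for every $r$ with $p_r\notin\gamma$ there exists $u\in\gamma^\perp\cap\sigma^\vee$ such that $\langle p_r,u\rangle=1$ and $\langle p_j,u\rangle=0$ for all $j\ne r$, $1\le j\le k$.
   Context: $N$ lattice, $M$ dual, $\langle\cdot,\cdot\rangle$ pairing, $\sigma^\vee$ the dual cone. Regular face: primitive ray generators extend to a basis of $N$. Demazure root for a ray generator $p_i$ of $\sigma$: $e\in M$ with $\langle p_i,e\rangle=-1$ and $\langle p_j,e\rangle\ge0$ for all other ray generators of $\sigma$. Compatibility with $\tau$: $\langle p_s,e_1^{(r)}\rangle=\langle p_s,e_2^{(r)}\rangle=-\delta_{rs}$ for $r,s=1,\ldots,k$. *)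

theory Defs
  imports "HOL-Analysis.Analysis"
begin

text \<open>Conventions: N = Z^n and M = Z^n sit inside N_Q = M_Q = rat^'n
  (the dimension n is the cardinality of the finite index type 'n).
  The pairing is the standard one.\<close>

definition pair :: "rat ^ 'n \<Rightarrow> rat ^ 'n \<Rightarrow> rat" where
  "pair v u = (\<Sum>i\<in>UNIV. v $ i * u $ i)"

definition lattice_pt :: "rat ^ 'n \<Rightarrow> bool" where
  "lattice_pt v \<longleftrightarrow> (\<forall>i. v $ i \<in> \<int>)"

definition primitive :: "rat ^ 'n \<Rightarrow> bool" where
  "primitive v \<longleftrightarrow> lattice_pt v \<and> v \<noteq> 0 \<and>
     (\<forall>(m::int) w. lattice_pt w \<and> v = of_int m *s w \<longrightarrow> \<bar>m\<bar> = 1)"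

definition cone_gen :: "(rat ^ 'n) set \<Rightarrow> (rat ^ 'n) set" where
  "cone_gen S = {\<Sum>v\<in>S. a v *s v | a. \<forall>v\<in>S. a v \<ge> 0}"

definition rat_poly_cone :: "(rat ^ 'n) set \<Rightarrow> bool" where
  "rat_poly_cone \<sigma> \<longleftrightarrow> (\<exists>S. finite S \<and> (\<forall>v\<in>S. lattice_pt v) \<and> \<sigma> = cone_gen S)"

definition strongly_convex :: "(rat ^ 'n) set \<Rightarrow> bool" where
  "strongly_convex \<sigma> \<longleftrightarrow> (\<forall>x. x \<in> \<sigma> \<and> - x \<in> \<sigma> \<longrightarrow> x = 0)"

definition dual_cone :: "(rat ^ 'n) set \<Rightarrow> (rat ^ 'n) set" where
  "dual_cone \<sigma> = {u. \<forall>v\<in>\<sigma>. pair v u \<ge> 0}"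

definition perp :: "(rat ^ 'n) set \<Rightarrow> (rat ^ 'n) set" where
  "perp \<gamma> = {u. \<forall>v\<in>\<gamma>. pair v u = 0}"

definition is_face :: "(rat ^ 'n) set \<Rightarrow> (rat ^ 'n) set \<Rightarrow> bool" where
  "is_face \<gamma> \<sigma> \<longleftrightarrow> (\<exists>u\<in>dual_cone \<sigma>. \<gamma> = \<sigma> \<inter> {v. pair v u = 0})"

definition ray_gens :: "(rat ^ 'n) set \<Rightarrow> (rat ^ 'n) set" where
  "ray_gens \<sigma> = {p. primitive p \<and> is_face (cone_gen {p}) \<sigma>}"

definition extends_to_lattice_basis :: "(rat ^ 'n) set \<Rightarrow> bool" where
  "extends_to_lattice_basis P \<longleftrightarrow> (\<exists>B. finite B \<and> P \<subseteq> B \<and> (\<forall>b\<in>B. lattice_pt b) \<and>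
     (\<forall>c. (\<Sum>b\<in>B. c b *s b) = 0 \<longrightarrow> (\<forall>b\<in>B. c b = 0)) \<and>
     (\<forall>x. lattice_pt x \<longrightarrow> (\<exists>c. (\<forall>b\<in>B. c b \<in> \<int>) \<and> x = (\<Sum>b\<in>B. c b *s b))))"

definition regular_face :: "(rat ^ 'n) set \<Rightarrow> (rat ^ 'n) set \<Rightarrow> bool" where
  "regular_face \<tau> \<sigma> \<longleftrightarrow> is_face \<tau> \<sigma> \<and> extends_to_lattice_basis (ray_gens \<tau>)"

definition demazure_root :: "(rat ^ 'n) set \<Rightarrow> rat ^ 'n \<Rightarrow> rat ^ 'n \<Rightarrow> bool" where
  "demazure_root \<sigma> p e \<longleftrightarrow> p \<in> ray_gens \<sigma> \<and> lattice_pt e \<and> pair p e = -1 \<and>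
     (\<forall>q\<in>ray_gens \<sigma>. q \<noteq> p \<longrightarrow> pair q e \<ge> 0)"

end

theory Submission
  imports Defs
begin


lemma pair_add_left: "pair (v + w) u = pair v u + pair w u"
  by (simp add: pair_def distrib_right sum.distrib)
lemma pair_add_right: "pair u (v + w) = pair u v + pair u w"
  by (simp add: pair_def distrib_left sum.distrib)
lemma pair_diff_left: "pair (v - w) u = pair v u - pair w u"
  by (simp add: pair_def left_diff_distrib sum_subtractf)
lemma pair_diff_right: "pair u (v - w) = pair u v - pair u w"
  by (simp add: pair_def right_diff_distrib sum_subtractf)
lemma pair_neg_left: "pair (- v) u = - pair v u"
  by (simp add: pair_def sum_negf)
lemma pair_scale_left: "pair (c *s v) u = c * pair v u"
  by (simp add: pair_def sum_distrib_left mult.assoc)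
lemma pair_scale_right: "pair u (c *s v) = c * pair u v"
  by (simp add: pair_def sum_distrib_left mult.left_commute)
lemma pair_zero_left: "pair 0 u = 0"
  by (simp add: pair_def)
lemma pair_zero_right: "pair u 0 = 0"
  by (simp add: pair_def)
lemma pair_sum_left: "pair (\<Sum>i\<in>I. f i) u = (\<Sum>i\<in>I. pair (f i) u)"
  by (induction I rule: infinite_finite_induct) (auto simp: pair_zero_left pair_add_left)
lemma pair_sum_right: "pair u (\<Sum>i\<in>I. f i) = (\<Sum>i\<in>I. pair u (f i))"
  by (induction I rule: infinite_finite_induct) (auto simp: pair_zero_right pair_add_right)
lemma pair_sym: "pair v u = pair u v"
  by (simp add: pair_def mult.commute)
lemma pair_self_pos: assumes "v \<noteq> 0" shows "pair v v > 0"
proof -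
  from assms obtain i where i: "v $ i \<noteq> 0" by (auto simp: vec_eq_iff)
  have "0 < v $ i * v $ i" using i by (auto simp: zero_less_mult_iff linorder_neq_iff)
  also have "\<dots> \<le> pair v v" unfolding pair_def
    by (rule member_le_sum) auto
  finally show ?thesis .
qed

lemmas pair_simps = pair_add_left pair_add_right pair_diff_left pair_diff_right pair_neg_left
  pair_scale_left pair_scale_right pair_zero_left pair_zero_right pair_sum_left pair_sum_right

definition cone_idx :: "('i \<Rightarrow> rat ^ 'n) \<Rightarrow> 'i set \<Rightarrow> (rat ^ 'n) set" where
  "cone_idx g I = {\<Sum>i\<in>I. a i *s g i | a. \<forall>i\<in>I. a i \<ge> 0}"

lemma cone_gen_idx: "cone_gen S = cone_idx (\<lambda>v. v) S"
  by (simp add: cone_gen_def cone_idx_def)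

lemma farkas:
  assumes "finite I" "x \<notin> cone_idx g I"
  shows "\<exists>u. pair x u < 0 \<and> (\<forall>i\<in>I. pair (g i) u \<ge> 0)"
  using assms
proof (induction I arbitrary: g x rule: finite_induct)
  case empty
  then have "x \<noteq> 0" by (auto simp: cone_idx_def)
  then have "pair x (- x) < 0" using pair_self_pos[of x]
    by (simp add: pair_sym[of x "-x"] pair_neg_left)
  then show ?case by auto
next
  case (insert i0 I)
  have "x \<notin> cone_idx g I"
  proof
    assume "x \<in> cone_idx g I"
    then obtain a where a: "x = (\<Sum>i\<in>I. a i *s g i)" "\<forall>i\<in>I. a i \<ge> 0"
      by (auto simp: cone_idx_def)
    define a' where "a' = a(i0 := 0)"
    have "(\<Sum>i\<in>insert i0 I. a' i *s g i) = (\<Sum>i\<in>I. a' i *s g i)"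
      using insert.hyps by (simp add: a'_def)
    also have "\<dots> = x" unfolding a(1) a'_def using insert.hyps
      by (intro sum.cong) auto
    finally have "x \<in> cone_idx g (insert i0 I)"
      unfolding cone_idx_def using a(2) by (auto simp: a'_def intro!: exI[of _ a'])
    with insert.prems show False by simp
  qed
  from insert.IH[OF this] obtain u' where u': "pair x u' < 0" "\<forall>i\<in>I. pair (g i) u' \<ge> 0"
    by blast
  define \<alpha> where "\<alpha> = pair (g i0) u'"
  show ?case
  proof (cases "\<alpha> \<ge> 0")
    case True
    then show ?thesis using u' by (auto simp: \<alpha>_def)
  next
    case False
    hence neg: "\<alpha> < 0" by simp
    define h where "h v = \<alpha> *s v - pair v u' *s g i0" for v
    have "h x \<notin> cone_idx (h \<circ> g) I"
    proof
      assume "h x \<in> cone_idx (h \<circ> g) I"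
      then obtain l where l: "h x = (\<Sum>i\<in>I. l i *s h (g i))" "\<forall>i\<in>I. l i \<ge> 0"
        by (auto simp: cone_idx_def)
      define \<beta> where "\<beta> = (pair x u' - (\<Sum>i\<in>I. l i * pair (g i) u')) / \<alpha>"
      have "(\<Sum>i\<in>I. l i * pair (g i) u') \<ge> 0"
        using l(2) u'(2) by (intro sum_nonneg) auto
      hence "\<beta> \<ge> 0" unfolding \<beta>_def using neg u'(1)
        by (intro divide_nonpos_neg) auto
      have "\<alpha> *s x - pair x u' *s g i0 = \<alpha> *s (\<Sum>i\<in>I. l i *s g i) - (\<Sum>i\<in>I. l i * pair (g i) u') *s g i0"
        using l(1) unfolding h_def
        by (simp add: vec_eq_iff sum_subtractf right_diff_distrib sum_distrib_left
            sum_distrib_right algebra_simps)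
      hence "\<alpha> *s x = \<alpha> *s ((\<Sum>i\<in>I. l i *s g i) + \<beta> *s g i0)"
        unfolding \<beta>_def using neg
        by (simp add: vec_eq_iff algebra_simps diff_divide_distrib)
      hence xeq: "x = (\<Sum>i\<in>I. l i *s g i) + \<beta> *s g i0" using neg by (metis vector_mul_lcancel less_irrefl)
      define a where "a = l(i0 := \<beta>)"
      have "(\<Sum>i\<in>insert i0 I. a i *s g i) = \<beta> *s g i0 + (\<Sum>i\<in>I. a i *s g i)"
        using insert.hyps by (simp add: a_def)
      also have "(\<Sum>i\<in>I. a i *s g i) = (\<Sum>i\<in>I. l i *s g i)"
        using insert.hyps by (intro sum.cong) (auto simp: a_def)
      finally have "x \<in> cone_idx g (insert i0 I)"
        unfolding cone_idx_def using l(2) \<open>\<beta> \<ge> 0\<close> xeq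
        by (auto simp: a_def add.commute intro!: exI[of _ a])
      with insert.prems show False by simp
    qed
    from insert.IH[OF this] obtain w where w: "pair (h x) w < 0" "\<forall>i\<in>I. pair (h (g i)) w \<ge> 0"
      by auto
    define u where "u = \<alpha> *s w - pair (g i0) w *s u'"
    have key: "pair v u = pair (h v) w" for v
      unfolding u_def h_def by (simp add: pair_simps pair_sym[of "g i0" w] algebra_simps)
    have "pair (g i0) u = 0"
      unfolding u_def by (simp add: pair_simps \<alpha>_def)
    then show ?thesis using w key by (intro exI[of _ u]) auto
  qed
qed



lemma cone_gen_zero: "0 \<in> cone_gen S"
  unfolding cone_gen_def by (auto intro!: exI[of _ "\<lambda>_. 0"])

lemma cone_gen_elem: assumes "finite S" "s \<in> S" shows "s \<in> cone_gen S"
proof -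
  have "(\<Sum>v\<in>S. (if v = s then 1 else 0) *s v) = (\<Sum>v\<in>S. if v = s then v else 0)"
    by (intro sum.cong) auto
  also have "\<dots> = s" using assms by simp
  finally have "(\<Sum>v\<in>S. (if v = s then 1 else 0) *s v) = s" .
  then show ?thesis unfolding cone_gen_def
    by (auto intro!: exI[of _ "\<lambda>v. if v = s then 1 else 0"])
qed

lemma cone_gen_add: assumes "v \<in> cone_gen S" "w \<in> cone_gen S" shows "v + w \<in> cone_gen S"
proof -
  obtain a b where "v = (\<Sum>x\<in>S. a x *s x)" "\<forall>x\<in>S. a x \<ge> 0"
    "w = (\<Sum>x\<in>S. b x *s x)" "\<forall>x\<in>S. b x \<ge> 0"
    using assms by (auto simp: cone_gen_def)
  then show ?thesis unfolding cone_gen_def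
    by (auto simp: sum.distrib[symmetric] vector_sadd_rdistrib intro!: exI[of _ "\<lambda>x. a x + b x"])
qed

lemma cone_gen_scale: assumes "v \<in> cone_gen S" "c \<ge> 0" shows "c *s v \<in> cone_gen S"
proof -
  obtain a where "v = (\<Sum>x\<in>S. a x *s x)" "\<forall>x\<in>S. a x \<ge> 0"
    using assms by (auto simp: cone_gen_def)
  then show ?thesis unfolding cone_gen_def using assms(2)
    by (auto simp: vec_eq_iff sum_distrib_left mult.assoc
         intro!: exI[of _ "\<lambda>x. c * a x"])
qed

lemma cone_gen_mono: assumes "finite S" "T \<subseteq> S" shows "cone_gen T \<subseteq> cone_gen S"
proof
  fix v assume "v \<in> cone_gen T"
  then obtain a where a: "v = (\<Sum>x\<in>T. a x *s x)" "\<forall>x\<in>T. a x \<ge> 0"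
    by (auto simp: cone_gen_def)
  define b where "b x = (if x \<in> T then a x else 0)" for x
  have "(\<Sum>x\<in>S. b x *s x) = (\<Sum>x\<in>T. b x *s x)"
    using assms by (intro sum.mono_neutral_right) (auto simp: b_def)
  also have "\<dots> = v" unfolding a by (intro sum.cong) (auto simp: b_def)
  finally show "v \<in> cone_gen S" unfolding cone_gen_def using a(2)
    by (auto simp: b_def intro!: exI[of _ b])
qed

lemma cone_gen_sum: assumes "finite I" "\<And>i. i \<in> I \<Longrightarrow> f i \<in> cone_gen S"
  shows "(\<Sum>i\<in>I. f i) \<in> cone_gen S"
  using assms by (induction I rule: finite_induct) (auto simp: cone_gen_zero cone_gen_add)

lemma cone_gen_remove:
  assumes "finite T" "s \<in> T" "s \<in> cone_gen (T - {s})"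
  shows "cone_gen T = cone_gen (T - {s})"
proof
  show "cone_gen (T - {s}) \<subseteq> cone_gen T" using assms by (intro cone_gen_mono) auto
  show "cone_gen T \<subseteq> cone_gen (T - {s})"
  proof
    fix v assume "v \<in> cone_gen T"
    then obtain a where a: "v = (\<Sum>x\<in>T. a x *s x)" "\<forall>x\<in>T. a x \<ge> 0"
      by (auto simp: cone_gen_def)
    have "v = a s *s s + (\<Sum>x\<in>T - {s}. a x *s x)"
      unfolding a using assms by (simp add: sum.remove)
    moreover have "a s *s s \<in> cone_gen (T - {s})" using a assms by (intro cone_gen_scale) auto
    moreover have "(\<Sum>x\<in>T - {s}. a x *s x) \<in> cone_gen (T - {s})"
      using a assms by (intro cone_gen_sum cone_gen_scale cone_gen_elem) auto
    ultimately show "v \<in> cone_gen (T - {s})" by (simp add: cone_gen_add)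
  qed
qed

lemma pair_cone_nonneg:
  assumes "v \<in> cone_gen S" "\<And>s. s \<in> S \<Longrightarrow> pair s u \<ge> 0"
  shows "pair v u \<ge> 0"
proof -
  obtain a where a: "v = (\<Sum>x\<in>S. a x *s x)" "\<forall>x\<in>S. a x \<ge> 0"
    using assms by (auto simp: cone_gen_def)
  show ?thesis unfolding a using a(2) assms(2)
    by (auto simp: pair_simps intro!: sum_nonneg)
qed

lemma cone_gen_singleton: "cone_gen {q} = {c *s q | c. c \<ge> 0}"
  unfolding cone_gen_def by auto



lemma exists_primitive:
  assumes "lattice_pt s" "s \<noteq> 0"
  shows "\<exists>q g. primitive q \<and> g > 0 \<and> s = g *s q"
proof -
  define c where "c i = \<lfloor>s $ i\<rfloor>" for i
  have sc: "s $ i = of_int (c i)" for i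
    using assms(1) unfolding lattice_pt_def c_def by (metis Ints_cases floor_of_int)
  define G where "G = Gcd (range c)"
  from assms(2) obtain i0 where "s $ i0 \<noteq> 0" by (auto simp: vec_eq_iff)
  hence "c i0 \<noteq> 0" using sc by auto
  hence "G \<noteq> 0" unfolding G_def by auto
  hence Gpos: "G > 0" unfolding G_def
    by (metis Gcd_int_greater_eq_0 order_le_neq_trans)
  have Gd: "G dvd c i" for i unfolding G_def by (rule Gcd_dvd) auto
  define q where "q = (1 / of_int G) *s s"
  have qc: "q $ i = of_int (c i div G)" for i
    using Gd[of i] Gpos unfolding q_def
    by (auto simp: sc elim!: dvdE)
  have "primitive q"
    unfolding primitive_def
  proof (intro conjI allI impI)
    show "lattice_pt q" unfolding lattice_pt_def qc by auto
    show "q \<noteq> 0" using assms(2) Gpos unfolding q_def by auto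
    fix m :: int and w assume mw: "lattice_pt w \<and> q = of_int m *s w"
    have "G * m dvd c i" for i
    proof -
      obtain d where d: "w $ i = of_int d" using mw unfolding lattice_pt_def by (metis Ints_cases)
      have "of_int (c i div G) = (of_int m * of_int d :: rat)"
        using mw d qc[of i] by auto
      hence "c i div G = m * d" by (metis of_int_eq_iff of_int_mult)
      hence "c i = G * (m * d)" using Gd[of i] by (metis dvd_mult_div_cancel)
      thus ?thesis by auto
    qed
    hence "G * m dvd G" unfolding G_def by (intro Gcd_greatest) auto
    hence "G * m dvd G * 1" by simp
    hence "m dvd 1" using Gpos by (subst (asm) dvd_mult_cancel_left) auto
    thus "\<bar>m\<bar> = 1" by simp
  qed
  moreover have "s = of_int G *s q" using Gpos unfolding q_def by simp
  ultimately show ?thesis using Gpos by (intro exI[of _ q] exI[of _ "of_int G"]) auto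
qed

lemma P_sum: "k *s (\<Sum>i\<in>T. a i *s i) - pair (\<Sum>i\<in>T. a i *s i) s *s s = (\<Sum>i\<in>T. a i *s (k *s i - pair i s *s s))"
proof (induction T rule: infinite_finite_induct)
  case (insert x F)
  then show ?case by (simp add: pair_simps vector_add_ldistrib vector_sadd_rdistrib vector_smult_assoc vector_ssub_ldistrib vector_sub_rdistrib)
qed (auto simp: pair_zero_left)

lemma exposed:
  assumes fin: "finite S0" and sc: "strongly_convex (cone_gen S0)"
    and mini: "\<And>T. T \<subset> S0 \<Longrightarrow> cone_gen T \<noteq> cone_gen S0" and sS: "s \<in> S0"
  shows "s \<noteq> 0 \<and> (\<exists>u. pair s u = 0 \<and> (\<forall>t\<in>S0-{s}. pair t u > 0))"
proof -
  define T where "T = S0 - {s}"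
  have finT: "finite T" using fin by (simp add: T_def)
  have notin: "x \<notin> cone_gen (S0 - {x})" if "x \<in> S0" for x
    using mini[of "S0 - {x}"] cone_gen_remove[OF fin that] that by auto
  have nz: "x \<noteq> 0" if "x \<in> S0" for x
    using notin[OF that] cone_gen_zero by metis
  have sT: "s \<notin> cone_gen T" using notin[OF sS] by (simp add: T_def)
  have s0: "s \<noteq> 0" using nz sS by auto
  have ss: "pair s s > 0" using pair_self_pos[OF s0] .
  define P where "P v = pair s s *s v - pair v s *s s" for v
  have Pself: "pair v (P w) = pair (P v) w" for v w
    unfolding P_def by (simp add: pair_simps pair_sym[of s w] algebra_simps)
  have Ps: "pair s (P w) = 0" for w
    unfolding P_def by (simp add: pair_simps pair_sym[of s w] algebra_simps)
  have each: "\<exists>u. pair s u = 0 \<and> (\<forall>t'\<in>T. pair t' u \<ge> 0) \<and> pair t u > 0" if tT: "t \<in> T" for t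
  proof -
    have "- P t \<notin> cone_idx P T"
    proof
      assume "- P t \<in> cone_idx P T"
      then obtain a where a: "- P t = (\<Sum>i\<in>T. a i *s P i)" "\<forall>i\<in>T. a i \<ge> 0"
        by (auto simp: cone_idx_def)
      define y where "y = t + (\<Sum>i\<in>T. a i *s i)"
      have Psum: "P y = P t + (\<Sum>i\<in>T. a i *s P i)"
      proof -
        have "P y = P t + P (\<Sum>i\<in>T. a i *s i)" unfolding P_def y_def
          by (simp add: pair_simps vector_add_ldistrib vector_sadd_rdistrib algebra_simps)
        also have "P (\<Sum>i\<in>T. a i *s i) = (\<Sum>i\<in>T. a i *s P i)"
          unfolding P_def by (rule P_sum)
        finally show ?thesis .
      qed
      hence "P y = 0" using a(1) by (metis neg_eq_iff_add_eq_0)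
      hence "pair s s *s y = pair y s *s s" unfolding P_def by simp
      hence eqy: "pair s s *s y = pair y s *s s" .
      have "y = (1 / pair s s) *s (pair s s *s y)" using ss by (simp add: vector_smult_assoc)
      also have "\<dots> = (pair y s / pair s s) *s s" unfolding eqy by (simp add: vector_smult_assoc)
      finally have yc: "y = (pair y s / pair s s) *s s" .
      define c where "c = pair y s / pair s s"
      have sumT: "(\<Sum>i\<in>T. a i *s i) \<in> cone_gen T"
        using a(2) finT by (intro cone_gen_sum cone_gen_scale cone_gen_elem) auto
      have tinT: "t \<in> cone_gen T" using finT tT by (rule cone_gen_elem)
      have yT: "y \<in> cone_gen T" unfolding y_def using tinT sumT by (rule cone_gen_add)
      show False
      proof (cases "c > 0")
        case True
        have "s = (1 / c) *s y" using yc True unfolding c_def[symmetric] by simp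
        hence "s \<in> cone_gen T" using cone_gen_scale[OF yT, of "1/c"] True by simp
        with sT show False by simp
      next
        case False
        have sub: "cone_gen T \<subseteq> cone_gen S0" using fin by (intro cone_gen_mono) (auto simp: T_def)
        have "s \<in> cone_gen S0" using fin sS by (rule cone_gen_elem)
        hence "(- c) *s s \<in> cone_gen S0" using False by (intro cone_gen_scale) auto
        hence "(\<Sum>i\<in>T. a i *s i) + (- c) *s s \<in> cone_gen S0"
          using sumT sub by (intro cone_gen_add) auto
        moreover have "(\<Sum>i\<in>T. a i *s i) + (- c) *s s = - t"
        proof -
          have "(\<Sum>i\<in>T. a i *s i) = y - t" by (simp add: y_def)
          also have "y = c *s s" using yc by (simp add: c_def)
          finally show ?thesis by (simp add: vector_smult_lneg)
        qed
        ultimately have "- t \<in> cone_gen S0" by simp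
        moreover have "t \<in> cone_gen S0" using tinT sub by auto
        ultimately have "t = 0" using sc unfolding strongly_convex_def by auto
        with nz tT show False by (auto simp: T_def)
      qed
    qed
    from farkas[OF finT this] obtain w where w: "pair (- P t) w < 0" "\<forall>i\<in>T. pair (P i) w \<ge> 0"
      by auto
    show ?thesis using w Ps
      by (intro exI[of _ "P w"]) (auto simp: Pself pair_neg_left)
  qed
  then obtain U where U: "\<And>t. t \<in> T \<Longrightarrow> pair s (U t) = 0 \<and> (\<forall>t'\<in>T. pair t' (U t) \<ge> 0) \<and> pair t (U t) > 0"
    by metis
  define u where "u = (\<Sum>t\<in>T. U t)"
  have "pair s u = 0" unfolding u_def using U by (simp add: pair_simps)
  moreover have "pair t' u > 0" if "t' \<in> T" for t'
    unfolding u_def pair_sum_right using U that finT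
    by (intro sum_pos2[of T t']) auto
  ultimately show ?thesis using s0 by (auto simp: T_def)
qed



lemma ray_of:
  assumes fin: "finite S0" and lat: "\<forall>v\<in>S0. lattice_pt v" and sc: "strongly_convex (cone_gen S0)"
    and mini: "\<And>T. T \<subset> S0 \<Longrightarrow> cone_gen T \<noteq> cone_gen S0" and sS: "s \<in> S0"
  shows "\<exists>q g. q \<in> ray_gens (cone_gen S0) \<and> g > 0 \<and> s = g *s q"
proof -
  from exposed[OF fin sc mini sS] obtain u where s0: "s \<noteq> 0" and u: "pair s u = 0"
    "\<forall>t\<in>S0-{s}. pair t u > 0" by blast
  from exists_primitive[OF _ s0] lat sS obtain q g where q: "primitive q" "g > 0" "s = g *s q"
    by blast
  have qu: "pair q u = 0" using u(1) q by (simp add: pair_scale_left)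
  have nn: "pair x u \<ge> 0" if "x \<in> S0" for x
    using u that by (cases "x = s") (auto intro: less_imp_le)
  have dual: "u \<in> dual_cone (cone_gen S0)"
    unfolding dual_cone_def using nn by (auto intro: pair_cone_nonneg)
  have "cone_gen {q} = cone_gen S0 \<inter> {v. pair v u = 0}"
  proof
    show "cone_gen {q} \<subseteq> cone_gen S0 \<inter> {v. pair v u = 0}"
    proof
      fix v assume "v \<in> cone_gen {q}"
      then obtain c where c: "c \<ge> 0" "v = c *s q" by (auto simp: cone_gen_singleton)
      have veq: "v = (c / g) *s s" using q c by (simp add: vector_smult_assoc)
      have "s \<in> cone_gen S0" using fin sS by (rule cone_gen_elem)
      hence "(c / g) *s s \<in> cone_gen S0" using c(1) q(2) by (intro cone_gen_scale) auto
      hence "v \<in> cone_gen S0" using veq by simp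
      moreover have "pair v u = 0" using c qu by (simp add: pair_scale_left)
      ultimately show "v \<in> cone_gen S0 \<inter> {v. pair v u = 0}" by simp
    qed
    show "cone_gen S0 \<inter> {v. pair v u = 0} \<subseteq> cone_gen {q}"
    proof
      fix v assume "v \<in> cone_gen S0 \<inter> {v. pair v u = 0}"
      then obtain a where a: "v = (\<Sum>x\<in>S0. a x *s x)" "\<forall>x\<in>S0. a x \<ge> 0" and pv: "pair v u = 0"
        by (auto simp: cone_gen_def)
      have "(\<Sum>x\<in>S0. a x * pair x u) = 0" using pv unfolding a by (simp add: pair_simps)
      hence "\<forall>x\<in>S0. a x * pair x u = 0"
        using fin a(2) nn by (subst (asm) sum_nonneg_eq_0_iff) auto
      hence az: "a x = 0" if "x \<in> S0 - {s}" for x proof -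
        have "a x * pair x u = 0" "pair x u > 0" using that u(2) \<open>\<forall>x\<in>S0. a x * pair x u = 0\<close> by auto
        thus ?thesis by simp
      qed
      have "v = a s *s s + (\<Sum>x\<in>S0 - {s}. a x *s x)"
        unfolding a using fin sS by (simp add: sum.remove)
      also have "(\<Sum>x\<in>S0 - {s}. a x *s x) = 0" using az by (intro sum.neutral) auto
      finally have "v = (a s * g) *s q" using q by (simp add: vector_smult_assoc)
      moreover have "a s * g \<ge> 0" using a(2) sS q by auto
      ultimately show "v \<in> cone_gen {q}" by (auto simp: cone_gen_singleton)
    qed
  qed
  hence "is_face (cone_gen {q}) (cone_gen S0)" unfolding is_face_def using dual by blast
  hence "q \<in> ray_gens (cone_gen S0)" using q by (simp add: ray_gens_def)
  thus ?thesis using q by blast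
qed

lemma rays_generate:
  assumes "rat_poly_cone \<sigma>" "strongly_convex \<sigma>" "\<And>q. q \<in> ray_gens \<sigma> \<Longrightarrow> pair q u \<ge> 0"
  shows "u \<in> dual_cone \<sigma>"
proof -
  from assms(1) obtain S where S: "finite S" "\<forall>v\<in>S. lattice_pt v" "\<sigma> = cone_gen S"
    by (auto simp: rat_poly_cone_def)
  define P where "P T \<longleftrightarrow> T \<subseteq> S \<and> cone_gen T = \<sigma>" for T
  have "P S" using S by (simp add: P_def)
  from ex_has_least_nat[of P S card, OF this] obtain S0 where S0: "P S0"
    "\<And>T. P T \<Longrightarrow> card S0 \<le> card T" by blast
  have fin: "finite S0" using S0(1) S(1) by (auto simp: P_def intro: finite_subset)
  have lat: "\<forall>v\<in>S0. lattice_pt v" using S0(1) S(2) by (auto simp: P_def)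
  have eq: "cone_gen S0 = \<sigma>" using S0(1) by (simp add: P_def)
  have mini: "cone_gen T \<noteq> cone_gen S0" if "T \<subset> S0" for T
  proof
    assume "cone_gen T = cone_gen S0"
    hence "P T" using that S0(1) eq by (auto simp: P_def)
    hence "card S0 \<le> card T" by (rule S0(2))
    moreover have "card T < card S0" using that fin by (rule psubset_card_mono[rotated])
    ultimately show False by simp
  qed
  have sc: "strongly_convex (cone_gen S0)" using eq assms(2) by simp
  have "pair s u \<ge> 0" if "s \<in> S0" for s
  proof -
    from ray_of[OF fin lat sc mini that] obtain q g where
      "q \<in> ray_gens (cone_gen S0)" "g > 0" "s = g *s q" by blast
    thus ?thesis using assms(3)[of q] eq by (simp add: pair_scale_left)
  qed
  thus ?thesis unfolding dual_cone_def eq[symmetric] by (auto intro: pair_cone_nonneg)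
qed



lemma face_sub: "is_face F X \<Longrightarrow> F \<subseteq> X"
  by (auto simp: is_face_def)

lemma ray_in: "q \<in> ray_gens X \<Longrightarrow> q \<in> X"
proof -
  assume "q \<in> ray_gens X"
  hence "is_face (cone_gen {q}) X" by (simp add: ray_gens_def)
  moreover have "q \<in> cone_gen {q}" unfolding cone_gen_singleton by (auto intro!: exI[of _ 1])
  ultimately show ?thesis using face_sub by blast
qed

theorem mainTheorem11:
  fixes \<sigma> \<tau> \<gamma> :: "(rat ^ 'n) set"
    and k :: nat
    and p e1 e2 :: "nat \<Rightarrow> rat ^ 'n"
  assumes "rat_poly_cone \<sigma>" and "strongly_convex \<sigma>"
    and "regular_face \<tau> \<sigma>"
    and "inj_on p {1..k}" and "p ` {1..k} = ray_gens \<tau>"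
    and "\<And>r. r \<in> {1..k} \<Longrightarrow> demazure_root \<sigma> (p r) (e1 r) \<and> demazure_root \<sigma> (p r) (e2 r)"
    and "\<And>r s. r \<in> {1..k} \<Longrightarrow> s \<in> {1..k} \<Longrightarrow>
           pair (p s) (e1 r) = (if r = s then -1 else 0) \<and> pair (p s) (e2 r) = (if r = s then -1 else 0)"
    and "is_face \<gamma> \<sigma>"
    and "\<And>r. r \<in> {1..k} \<Longrightarrow> p r \<notin> \<gamma> \<Longrightarrow> e1 r \<in> perp \<gamma> \<or> e2 r \<in> perp \<gamma>"
  shows "\<forall>r\<in>{1..k}. p r \<notin> \<gamma> \<longrightarrow>
           (\<exists>u \<in> perp \<gamma> \<inter> dual_cone \<sigma>. pair (p r) u = 1 \<and>
               (\<forall>j\<in>{1..k}. j \<noteq> r \<longrightarrow> pair (p j) u = 0))"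
proof (intro ballI impI)
  fix r assume r: "r \<in> {1..k}" and pr: "p r \<notin> \<gamma>"
  from assms(8) obtain w0 where w0: "w0 \<in> dual_cone \<sigma>" "\<gamma> = \<sigma> \<inter> {v. pair v w0 = 0}"
    by (auto simp: is_face_def)
  have tau: "\<tau> \<subseteq> \<sigma>" using assms(3) by (auto simp: regular_face_def dest: face_sub)
  have pin: "p j \<in> \<sigma>" if "j \<in> {1..k}" for j
  proof -
    have "p j \<in> ray_gens \<tau>" using assms(5) that by blast
    thus ?thesis using ray_in[of "p j" \<tau>] tau by blast
  qed
  have pw0: "pair (p j) w0 \<ge> 0" if "j \<in> {1..k}" for j
    using w0(1) pin[OF that] by (auto simp: dual_cone_def)
  have rpos: "pair (p r) w0 > 0"
    using pw0[OF r] pin[OF r] pr w0(2) by (auto simp: order_le_less)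
  define J where "J = {j\<in>{1..k}. p j \<notin> \<gamma>}"
  define \<epsilon> where "\<epsilon> j = (if e1 j \<in> perp \<gamma> then e1 j else e2 j)" for j
  have eps: "\<epsilon> j \<in> perp \<gamma> \<and> demazure_root \<sigma> (p j) (\<epsilon> j) \<and>
      (\<forall>s\<in>{1..k}. pair (p s) (\<epsilon> j) = (if j = s then -1 else 0))" if "j \<in> J" for j
    using that assms(6)[of j] assms(7)[of j] assms(9)[of j] unfolding J_def \<epsilon>_def by auto
  define t where "t = 1 / pair (p r) w0"
  have tpos: "t > 0" using rpos by (simp add: t_def)
  define u where "u = t *s w0 + (\<Sum>j\<in>J-{r}. (t * pair (p j) w0) *s \<epsilon> j)"
  have pu: "pair (p s) u = t * pair (p s) w0 - (if s \<in> J - {r} then t * pair (p s) w0 else 0)"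
    if s: "s \<in> {1..k}" for s
  proof -
    have "pair (p s) u = t * pair (p s) w0 + (\<Sum>j\<in>J-{r}. t * pair (p j) w0 * pair (p s) (\<epsilon> j))"
      unfolding u_def by (simp add: pair_simps)
    also have "(\<Sum>j\<in>J-{r}. t * pair (p j) w0 * pair (p s) (\<epsilon> j)) =
        (\<Sum>j\<in>J-{r}. if j = s then - (t * pair (p j) w0) else 0)"
      using eps s by (intro sum.cong) auto
    also have "\<dots> = (if s \<in> J - {r} then - (t * pair (p s) w0) else 0)"
      by (rule sum.delta) (simp add: J_def)
    finally show ?thesis by simp
  qed
  have "pair (p r) u = 1" using pu[OF r] rpos by (simp add: t_def)
  moreover have "pair (p j) u = 0" if "j \<in> {1..k}" "j \<noteq> r" for j
  proof (cases "j \<in> J")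
    case True then show ?thesis using pu[OF that(1)] that by simp
  next
    case False
    hence "p j \<in> \<gamma>" using that by (auto simp: J_def)
    hence "pair (p j) w0 = 0" using w0(2) by auto
    then show ?thesis using pu[OF that(1)] by simp
  qed
  moreover have "u \<in> perp \<gamma>"
  proof -
    have "pair v u = 0" if "v \<in> \<gamma>" for v
    proof -
      have "pair v w0 = 0" using that w0(2) by auto
      moreover have "pair v (\<epsilon> j) = 0" if "j \<in> J - {r}" for j
        using eps[of j] that \<open>v \<in> \<gamma>\<close> by (auto simp: perp_def)
      ultimately show ?thesis unfolding u_def by (simp add: pair_simps)
    qed
    thus ?thesis by (simp add: perp_def)
  qed
  moreover have "u \<in> dual_cone \<sigma>"
  proof (rule rays_generate[OF assms(1,2)])
    fix q assume q: "q \<in> ray_gens \<sigma>"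
    show "pair q u \<ge> 0"
    proof (cases "\<exists>s\<in>{1..k}. q = p s")
      case True
      then obtain s where s: "s \<in> {1..k}" "q = p s" by auto
      show ?thesis using pu[OF s(1)] s pw0[OF s(1)] tpos by auto
    next
      case False
      have "pair q w0 \<ge> 0" using ray_in[OF q] w0(1) by (auto simp: dual_cone_def)
      moreover have "pair q (\<epsilon> j) \<ge> 0" if "j \<in> J - {r}" for j
        using eps[of j] that q False unfolding demazure_root_def J_def by auto
      moreover have "pair (p j) w0 \<ge> 0" if "j \<in> J - {r}" for j
        using pw0 that by (auto simp: J_def)
      ultimately show ?thesis unfolding u_def using tpos
        by (auto simp: pair_simps intro!: add_nonneg_nonneg sum_nonneg mult_nonneg_nonneg)
    qed
  qed
  ultimately show "\<exists>u \<in> perp \<gamma> \<inter> dual_cone \<sigma>. pair (p r) u = 1 \<and>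
               (\<forall>j\<in>{1..k}. j \<noteq> r \<longrightarrow> pair (p j) u = 0)" by blast
qed

end
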